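(* Let $n\in\mathbb{N}_{+}$, $a\in\mathbb{R}_{\ge 0}$ and $b\in[0,\tfrac12]$, and consider the ODE system \[ \dot{x}_i = x_i(1 - x_i)(x_i - b) - (n - 1)a x_i + \sum_{j=1,\, j\neq i}^{n} a x_j,\qquad i=1,\dots,n. \] For any steady state $x=(x_1,\dots,x_n)\in\mathbb{R}_{\ge 0}^n$ of this system (i.e. a nonnegative point at which all right-hand sides vanish), the coordinates $x_1,\dots,x_n$ take at most three distinct values.
   Context: A steady state of the system for given parameters $(a,b)$ is a point $x\in\mathbb{R}_{\ge 0}^n$ at which the right-hand side of every equation vanishes; only nonnegative steady states are considered. *)

theory Defs
  imports Complex_Main
begin

definition rhs :: "nat \<Rightarrow> real \<Rightarrow> real \<Rightarrow> (nat \<Rightarrow> real) \<Rightarrow> nat \<Rightarrow> real" where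
  "rhs n a b x i = x i * (1 - x i) * (x i - b) - (real n - 1) * a * x i
      + (\<Sum>j\<in>{1..n} - {i}. a * x j)"

definition steady_state :: "nat \<Rightarrow> real \<Rightarrow> real \<Rightarrow> (nat \<Rightarrow> real) \<Rightarrow> bool" where
  "steady_state n a b x \<longleftrightarrow> (\<forall>i\<in>{1..n}. x i \<ge> 0 \<and> rhs n a b x i = 0)"

end

theory Submission
  imports Defs "HOL-Computational_Algebra.Polynomial"
begin

theorem theorem1:
  fixes n :: nat and a b :: real and x :: "nat \<Rightarrow> real"
  assumes "n \<ge> 1" and "a \<ge> 0" and "0 \<le> b" and "b \<le> 1/2"
    and "steady_state n a b x"
  shows "card (x ` {1..n}) \<le> 3"
proof -
  define S where "S = (\<Sum>j\<in>{1..n}. a * x j)"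
  define p where "p = [: S, - b - real n * a, 1 + b, -1 :]"
  have p0: "p \<noteq> 0" unfolding p_def by simp
  have dp: "degree p = 3" unfolding p_def by simp
  have sub: "x ` {1..n} \<subseteq> {t. poly p t = 0}"
  proof
    fix t assume "t \<in> x ` {1..n}"
    then obtain i where i: "i \<in> {1..n}" "t = x i" by auto
    have r: "rhs n a b x i = 0" using assms(5) i(1) unfolding steady_state_def by auto
    have "(\<Sum>j\<in>{1..n} - {i}. a * x j) = S - a * x i"
      unfolding S_def using i(1) by (simp add: sum_diff1)
    then have "x i * (1 - x i) * (x i - b) - (real n - 1) * a * x i + (S - a * x i) = 0"
      using r unfolding rhs_def by simp
    then show "t \<in> {t. poly p t = 0}" unfolding p_def using i(2)
      by (simp add: algebra_simps power2_eq_square power3_eq_cube)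
  qed
  have "card (x ` {1..n}) \<le> card {t. poly p t = 0}"
    by (rule card_mono[OF poly_roots_finite[OF p0] sub])
  also have "\<dots> \<le> 3" using card_poly_roots_bound[OF p0] dp by simp
  finally show ?thesis .
qed

end
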